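(* A semiring $R$ has a zero if and only if the identity relation $\mathrm{id}_R=\{(x,x)\mid x\in R\}$ is a $k$-congruence on $R$. In this case, if $0$ is the zero of $R$, then $\kappa_{\{0\}}=\mathrm{id}_R$.
   Context: A semiring $(R,+,\cdot)$ is a set with two binary operations such that $(R,+)$ is a commutative semigroup, $(R,\cdot)$ is a semigroup, and multiplication distributes over addition from both sides; no additive neutral element or identity is assumed. An element $0\in R$ is a zero of $R$ if $0+r=r$ and $0r=r0=0$ for all $r\in R$. An ideal of $R$ is a nonempty subset $A\subseteq R$ with $a+b\in A$ and $ra,ar\in A$ for all $a,b\in A$, $r\in R$. A congruence on $R$ is an equivalence relation $\equiv$ such that $a\equiv b$ implies $a+c\equiv b+c$, $ac\equiv bc$, $ca\equiv cb$ for all $a,b,c\in R$. For an ideal $A$, $\kappa_A$ is the congruence defined by $x\,\kappa_A\,y$ iff $x+a=y+b$ for some $a,b\in A$. A congruence $\theta$ is a $k$-congruence if $\theta=\kappa_A$ for some ideal $A$ of $R$. Throughout, $|R|\geq 2$. *)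

theory Defs
  imports Main
begin

text \<open>Semirings are modelled by the type class semiring of HOL: a commutative
additive semigroup, a multiplicative semigroup, two-sided distributivity;
no zero or one is assumed.\<close>

definition is_zero :: "'a::semiring \<Rightarrow> bool" where
  "is_zero z \<longleftrightarrow> (\<forall>r. z + r = r \<and> z * r = z \<and> r * z = z)"

definition sr_ideal :: "'a::semiring set \<Rightarrow> bool" where
  "sr_ideal A \<longleftrightarrow> A \<noteq> {} \<and> (\<forall>a\<in>A. \<forall>b\<in>A. a + b \<in> A)
     \<and> (\<forall>a\<in>A. \<forall>r. r * a \<in> A \<and> a * r \<in> A)"

definition sr_congruence :: "'a::semiring rel \<Rightarrow> bool" where
  "sr_congruence \<theta> \<longleftrightarrow> equiv UNIV \<theta> \<and>
     (\<forall>a b c. (a, b) \<in> \<theta> \<longrightarrow> (a + c, b + c) \<in> \<theta> \<and> (a * c, b * c) \<in> \<theta> \<and> (c * a, c * b) \<in> \<theta>)"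

definition kappa :: "'a::semiring set \<Rightarrow> 'a rel" where
  "kappa A = {(x, y). \<exists>a\<in>A. \<exists>b\<in>A. x + a = y + b}"

definition k_congruence :: "'a::semiring rel \<Rightarrow> bool" where
  "k_congruence \<theta> \<longleftrightarrow> sr_congruence \<theta> \<and> (\<exists>A. sr_ideal A \<and> \<theta> = kappa A)"

end

theory Submission
  imports Defs
begin

lemma kz: "is_zero (z::'a::semiring) \<Longrightarrow> kappa {z} = Id"
  unfolding kappa_def is_zero_def by (auto simp: add.commute)

lemma idcong: "sr_congruence (Id :: 'a::semiring rel)"
  unfolding sr_congruence_def by (auto simp: equiv_def refl_on_def sym_def trans_def)

theorem theorem4p2:
  assumes "\<exists>x y :: 'a::semiring. x \<noteq> y"
  shows "((\<exists>z::'a. is_zero z) \<longleftrightarrow> k_congruence (Id :: 'a rel))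
         \<and> (\<forall>z::'a. is_zero z \<longrightarrow> kappa {z} = Id)"
proof -
  have 1: "k_congruence (Id :: 'a rel)" if "is_zero z" for z :: 'a
  proof -
    have "sr_ideal {z}" using that unfolding sr_ideal_def is_zero_def by auto
    thus ?thesis unfolding k_congruence_def using idcong kz[OF that] by blast
  qed
  have 2: "\<exists>z::'a. is_zero z" if kc: "k_congruence (Id :: 'a rel)"
  proof -
    obtain A :: "'a set" where A: "sr_ideal A" "Id = kappa A"
      using kc[unfolded k_congruence_def] by blast
    have eq: "\<And>x y a b. a \<in> A \<Longrightarrow> b \<in> A \<Longrightarrow> x + a = y + b \<Longrightarrow> x = y"
    proof -
      fix x y a b assume "a \<in> A" "b \<in> A" "x + a = y + b"
      hence "(x,y) \<in> kappa A" unfolding kappa_def by blast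
      thus "x = y" using A(2) by auto
    qed
    obtain z where z: "z \<in> A" using A(1) unfolding sr_ideal_def by auto
    have sing: "\<And>a. a \<in> A \<Longrightarrow> a = z"
      using eq z by (metis add.commute)
    have zz: "z + z = z" using A(1) z sing unfolding sr_ideal_def by blast
    have "is_zero z" unfolding is_zero_def
    proof
      fix r
      have "(z + r) + z = r + z" by (metis zz add.assoc add.commute)
      hence "z + r = r" using eq z by blast
      moreover have "z * r = z" "r * z = z" using A(1) z sing unfolding sr_ideal_def by blast+
      ultimately show "z + r = r \<and> z * r = z \<and> r * z = z" by simp
    qed
    thus ?thesis by blast
  qed
  show ?thesis using 1 2 kz by blast
qed

end
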